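(* Let $(A_1,X_1)$ and $(A_2,X_2)$ be two graphs that cannot be distinguished by the 1-WL algorithm. Then any Graph U-Net-th network computes the same vector representation for them.
   Context: A graph is given by a symmetric adjacency matrix $A$ (possibly a multigraph with nonnegative integer entries) and node features $X$. The 1-WL (color refinement) algorithm starts from initial colors given by node features and iteratively recolors each node by (its current color, multiset of neighbors' current colors, counted with multiplicity) until stable. Two graphs "cannot be distinguished by the 1-WL algorithm" means: running 1-WL on their disjoint union, every stable color class contains the same number of nodes from each graph. A node-level map is 1-WL-bounded if the representation it assigns to a node depends only on the node's stable 1-WL color (computed on the disjoint union of the graphs under consideration); standard message-passing GNN layers are of this type. A Graph U-Net-th pooling layer, with fixed projection vector $p$, threshold $\beta\in\mathbb{R}$ and fixed integer $\ell\ge1$, maps an input $(A,H)$ to $(A^\ell[b,b],\,H[b])$, where $v=Hp$, $b$ is the indicator vector $b_i=1[v_i\ge\beta]$, and $M[b,b]$, $H[b]$ denote restriction to rows/columns with $b_i=1$. A Graph U-Net-th network alternates 1-WL-bounded GNN layers (applied to the current (multi)graph and features) with such pooling layers, and ends with a permutation-invariant readout of the final node representations. *)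

theory Defs
  imports Complex_Main "HOL-Library.Multiset"
begin

text \<open>A (multi)graph with nodes 0,...,nv-1, nonnegative integer adjacency matrix
  and node feature vectors (real lists).\<close>

record graph =
  nv   :: nat
  adj  :: "nat \<Rightarrow> nat \<Rightarrow> nat"
  feat :: "nat \<Rightarrow> real list"

definition symmetric_graph :: "graph \<Rightarrow> bool" where
  "symmetric_graph G \<longleftrightarrow> (\<forall>i<nv G. \<forall>j<nv G. adj G i j = adj G j i)"

text \<open>Colours at round t are represented by the induced partition: wl_rel t x y holds
  iff x and y have the same colour after t rounds. The colour of z is identified with
  its colour class.\<close>

fun wl_rel :: "'v set \<Rightarrow> ('v \<Rightarrow> 'v \<Rightarrow> nat) \<Rightarrow> ('v \<Rightarrow> 'c) \<Rightarrow> nat \<Rightarrow> 'v \<Rightarrow> 'v \<Rightarrow> bool" where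
  "wl_rel V A X 0 x y = (X x = X y)"
| "wl_rel V A X (Suc t) x y =
     (wl_rel V A X t x y \<and>
      (\<Sum>z\<in>V. replicate_mset (A x z) {w\<in>V. wl_rel V A X t z w}) =
      (\<Sum>z\<in>V. replicate_mset (A y z) {w\<in>V. wl_rel V A X t z w}))"

text \<open>Stable colouring: the limit of the refinement (refinement stabilises after
  finitely many rounds, after which the partition no longer changes).\<close>

definition wl_stable :: "'v set \<Rightarrow> ('v \<Rightarrow> 'v \<Rightarrow> nat) \<Rightarrow> ('v \<Rightarrow> 'c) \<Rightarrow> 'v \<Rightarrow> 'v \<Rightarrow> bool" where
  "wl_stable V A X x y \<longleftrightarrow> (\<forall>t. wl_rel V A X t x y)"

definition union_nodes :: "graph \<Rightarrow> graph \<Rightarrow> (nat + nat) set" where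
  "union_nodes G1 G2 = Inl ` {..<nv G1} \<union> Inr ` {..<nv G2}"

fun union_adj :: "graph \<Rightarrow> graph \<Rightarrow> nat + nat \<Rightarrow> nat + nat \<Rightarrow> nat" where
  "union_adj G1 G2 (Inl i) (Inl j) = adj G1 i j"
| "union_adj G1 G2 (Inr i) (Inr j) = adj G2 i j"
| "union_adj G1 G2 _ _ = 0"

fun union_feat :: "graph \<Rightarrow> graph \<Rightarrow> nat + nat \<Rightarrow> real list" where
  "union_feat G1 G2 (Inl i) = feat G1 i"
| "union_feat G1 G2 (Inr i) = feat G2 i"

definition union_stable :: "graph \<Rightarrow> graph \<Rightarrow> nat + nat \<Rightarrow> nat + nat \<Rightarrow> bool" where
  "union_stable G1 G2 = wl_stable (union_nodes G1 G2) (union_adj G1 G2) (union_feat G1 G2)"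

definition wl_indistinguishable :: "graph \<Rightarrow> graph \<Rightarrow> bool" where
  "wl_indistinguishable G1 G2 \<longleftrightarrow>
     (\<forall>x\<in>union_nodes G1 G2.
        card {i. i < nv G1 \<and> union_stable G1 G2 (Inl i) x} =
        card {j. j < nv G2 \<and> union_stable G1 G2 (Inr j) x})"

type_synonym layer = "graph \<Rightarrow> nat \<Rightarrow> real list"

definition wl_bounded :: "layer \<Rightarrow> bool" where
  "wl_bounded f \<longleftrightarrow>
     (\<forall>G1 G2 i j. i < nv G1 \<longrightarrow> j < nv G2 \<longrightarrow> union_stable G1 G2 (Inl i) (Inr j)
        \<longrightarrow> f G1 i = f G2 j)"

definition apply_layer :: "layer \<Rightarrow> graph \<Rightarrow> graph" where
  "apply_layer f G = G\<lparr>feat := f G\<rparr>"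

fun mat_pow :: "nat \<Rightarrow> (nat \<Rightarrow> nat \<Rightarrow> nat) \<Rightarrow> nat \<Rightarrow> nat \<Rightarrow> nat \<Rightarrow> nat" where
  "mat_pow n A 0 i j = (if i = j then 1 else 0)"
| "mat_pow n A (Suc l) i j = (\<Sum>k<n. A i k * mat_pow n A l k j)"

definition score :: "real list \<Rightarrow> real list \<Rightarrow> real" where
  "score p h = sum_list (map2 (*) h p)"   \<comment> \<open>v_i = (H p)_i = <H_i, p>\<close>

definition pool :: "real list \<Rightarrow> real \<Rightarrow> nat \<Rightarrow> graph \<Rightarrow> graph" where
  "pool p \<beta> l G =
     (let s = sorted_list_of_set {i. i < nv G \<and> score p (feat G i) \<ge> \<beta>} in
      \<lparr>nv = length s,
       adj = (\<lambda>a b. mat_pow (nv G) (adj G) l (s ! a) (s ! b)),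
       feat = (\<lambda>a. feat G (s ! a))\<rparr>)"

datatype op = GNN layer | Pool "real list" real nat

fun valid_op :: "op \<Rightarrow> bool" where
  "valid_op (GNN f) = wl_bounded f"
| "valid_op (Pool p \<beta> l) = (l \<ge> 1)"

fun run :: "op list \<Rightarrow> graph \<Rightarrow> graph" where
  "run [] G = G"
| "run (GNN f # ops) G = run ops (apply_layer f G)"
| "run (Pool p \<beta> l # ops) G = run ops (pool p \<beta> l G)"

definition node_reps :: "graph \<Rightarrow> real list list" where
  "node_reps G = map (feat G) [0..<nv G]"

definition perm_invariant :: "(real list list \<Rightarrow> 'r) \<Rightarrow> bool" where
  "perm_invariant R \<longleftrightarrow> (\<forall>xs ys. mset xs = mset ys \<longrightarrow> R xs = R ys)"

definition network_output :: "op list \<Rightarrow> (real list list \<Rightarrow> 'r) \<Rightarrow> graph \<Rightarrow> 'r" where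
  "network_output ops R G = R (node_reps (run ops G))"

end

theory Submission
  imports Defs
begin


lemma wl_refl: "wl_rel V A X t x x"
  by (induction t) simp_all
lemma wl_sym: "wl_rel V A X t x y \<Longrightarrow> wl_rel V A X t y x"
proof (induction t arbitrary: x y)
  case 0 then show ?case by simp
next
  case (Suc t)
  then show ?case by (simp only: wl_rel.simps)
qed
lemma wl_trans: "wl_rel V A X t x y \<Longrightarrow> wl_rel V A X t y z \<Longrightarrow> wl_rel V A X t x z"
proof (induction t arbitrary: x y z)
  case 0 then show ?case by simp
next
  case (Suc t)
  then show ?case by (simp only: wl_rel.simps) (elim conjE; intro conjI; metis)
qed
lemma wl_mono: "wl_rel V A X (t + k) x y \<Longrightarrow> wl_rel V A X t x y"
proof (induction k arbitrary: x y)
  case 0 then show ?case by simp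
next
  case (Suc k)
  then show ?case by (simp only: add_Suc_right wl_rel.simps)
qed
lemma wl_mono': "t \<le> t' \<Longrightarrow> wl_rel V A X t' x y \<Longrightarrow> wl_rel V A X t x y"
  using wl_mono[of V A X t "t' - t"] by simp
lemma count_rep_sum:
  "finite V \<Longrightarrow> count (\<Sum>z\<in>V. replicate_mset (a z) (c z)) C = (\<Sum>z\<in>V. a z * (if c z = C then 1 else 0))"
  by (auto simp add: count_sum intro!: sum.cong)
lemma summset_rep_sum:
  "finite V \<Longrightarrow> sum_mset (image_mset h (\<Sum>z\<in>V. replicate_mset (a z) (c z))) = (\<Sum>z\<in>V. a z * h (c z))"
  by (induction V rule: finite_induct) auto

definition equit :: "'v set \<Rightarrow> ('v \<Rightarrow> 'v \<Rightarrow> nat) \<Rightarrow> ('v \<Rightarrow> 'v \<Rightarrow> bool) \<Rightarrow> bool" where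
  "equit V A P \<longleftrightarrow> (\<forall>x y (g::'v \<Rightarrow> nat). P x y \<longrightarrow> (\<forall>k k'. P k k' \<longrightarrow> g k = g k') \<longrightarrow>
      (\<Sum>k\<in>V. A x k * g k) = (\<Sum>k\<in>V. A y k * g k))"

lemma equitD:
  assumes "equit V A P" "P x y" "\<And>k k'. P k k' \<Longrightarrow> g k = g k'"
  shows "(\<Sum>k\<in>V. A x k * g k) = (\<Sum>k\<in>V. A y k * g k)"
  using assms unfolding equit_def by blast

definition good :: "'v set \<Rightarrow> ('v \<Rightarrow> 'v \<Rightarrow> nat) \<Rightarrow> ('v \<Rightarrow> 'c) \<Rightarrow> ('v \<Rightarrow> 'v \<Rightarrow> bool) \<Rightarrow> bool" where
  "good V A X P \<longleftrightarrow> (\<forall>x y. P x y \<longrightarrow> x \<in> V \<and> y \<in> V) \<and> (\<forall>x\<in>V. P x x) \<and>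
     (\<forall>x y. P x y \<longrightarrow> P y x) \<and> (\<forall>x y z. P x y \<longrightarrow> P y z \<longrightarrow> P x z) \<and>
     (\<forall>x y. P x y \<longrightarrow> X x = X y) \<and> equit V A P"

lemma good_D:
  assumes "good V A X P"
  shows good_dom: "P x y \<Longrightarrow> x \<in> V \<and> y \<in> V"
    and good_refl: "x \<in> V \<Longrightarrow> P x x"
    and good_sym: "P x y \<Longrightarrow> P y x"
    and good_trans: "P x y \<Longrightarrow> P y z \<Longrightarrow> P x z"
    and good_feat: "P x y \<Longrightarrow> X x = X y"
    and good_equit: "equit V A P"
  using assms unfolding good_def by blast+

lemma good_below_wl:
  assumes "finite V" "good V A X P"
  shows "P x y \<Longrightarrow> wl_rel V A X t x y"
proof (induction t arbitrary: x y)
  case 0 then show ?case using good_feat[OF assms(2)] by simp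
next
  case (Suc t)
  define f where "f z = {w\<in>V. wl_rel V A X t z w}" for z
  have inv: "f k = f k'" if "P k k'" for k k'
  proof -
    have "wl_rel V A X t k k'" using Suc.IH that by blast
    then show ?thesis unfolding f_def
      by (intro Collect_cong) (meson wl_sym wl_trans)
  qed
  have "(\<Sum>z\<in>V. replicate_mset (A x z) (f z)) = (\<Sum>z\<in>V. replicate_mset (A y z) (f z))"
  proof (rule multiset_eqI)
    fix C
    have "(\<Sum>k\<in>V. A x k * (if f k = C then 1 else 0)) = (\<Sum>k\<in>V. A y k * (if f k = C then 1 else 0))"
      by (rule equitD[OF good_equit[OF assms(2)] Suc.prems]) (simp add: inv)
    then show "count (\<Sum>z\<in>V. replicate_mset (A x z) (f z)) C = count (\<Sum>z\<in>V. replicate_mset (A y z) (f z)) C"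
      using assms(1) by (simp add: count_rep_sum)
  qed
  then show ?case using Suc f_def by simp
qed

lemma exists_T:
  assumes "finite B" "\<forall>p\<in>B. \<exists>t. \<not> wl_rel V A X t (fst p) (snd p)"
  shows "\<exists>T. \<forall>p\<in>B. \<not> wl_rel V A X T (fst p) (snd p)"
  using assms
proof (induction B rule: finite_induct)
  case empty then show ?case by simp
next
  case (insert p B)
  then obtain T where T: "\<forall>q\<in>B. \<not> wl_rel V A X T (fst q) (snd q)" by auto
  obtain t where t: "\<not> wl_rel V A X t (fst p) (snd p)" using insert.prems by auto
  show ?case
  proof (intro exI ballI)
    fix q assume "q \<in> insert p B"
    then show "\<not> wl_rel V A X (max T t) (fst q) (snd q)"
      using T t wl_mono'[of _ "max T t"] by (metis insertE max.cobounded1 max.cobounded2)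
  qed
qed

lemma stable_good:
  assumes "finite V"
  shows "good V A X (\<lambda>x y. x \<in> V \<and> y \<in> V \<and> wl_stable V A X x y)"
proof -
  let ?P = "\<lambda>x y. x \<in> V \<and> y \<in> V \<and> wl_stable V A X x y"
  define B where "B = {p\<in>V\<times>V. \<not> wl_stable V A X (fst p) (snd p)}"
  have "finite B" using assms unfolding B_def by (auto intro: finite_subset[of _ "V\<times>V"])
  moreover have "\<forall>p\<in>B. \<exists>t. \<not> wl_rel V A X t (fst p) (snd p)"
    unfolding B_def wl_stable_def by auto
  ultimately obtain T where T: "\<forall>p\<in>B. \<not> wl_rel V A X T (fst p) (snd p)"
    using exists_T by blast
  have Tiff: "wl_rel V A X T x y \<longleftrightarrow> wl_stable V A X x y" if "x \<in> V" "y \<in> V" for x y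
    using T that unfolding B_def wl_stable_def by fastforce
  have eq: "equit V A ?P"
    unfolding equit_def
  proof (intro allI impI)
    fix x y and g :: "'a \<Rightarrow> nat"
    assume Pxy: "?P x y" and ginv: "\<forall>k k'. ?P k k' \<longrightarrow> g k = g k'"
    define f where "f z = {w\<in>V. wl_rel V A X T z w}" for z
    define h where "h C = g (SOME z. z \<in> V \<and> f z = C)" for C
    have hf: "h (f z) = g z" if "z \<in> V" for z
    proof -
      have ex: "\<exists>z'. z' \<in> V \<and> f z' = f z" using that by blast
      define z' where "z' = (SOME z'. z' \<in> V \<and> f z' = f z)"
      have z': "z' \<in> V" "f z' = f z" using someI_ex[OF ex] unfolding z'_def by auto
      have "z \<in> f z'" using z' that wl_refl unfolding f_def by auto
      then have "wl_rel V A X T z' z" unfolding f_def by auto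
      then have "?P z' z" using Tiff z' that by auto
      then show ?thesis using ginv unfolding h_def z'_def[symmetric] by auto
    qed
    have "wl_rel V A X (Suc T) x y" using Pxy unfolding wl_stable_def by blast
    then have M: "(\<Sum>z\<in>V. replicate_mset (A x z) (f z)) = (\<Sum>z\<in>V. replicate_mset (A y z) (f z))"
      unfolding f_def by simp
    have "(\<Sum>k\<in>V. A x k * g k) = (\<Sum>k\<in>V. A x k * h (f k))" using hf by simp
    also have "\<dots> = sum_mset (image_mset h (\<Sum>z\<in>V. replicate_mset (A x z) (f z)))"
      using assms by (simp add: summset_rep_sum)
    also have "\<dots> = sum_mset (image_mset h (\<Sum>z\<in>V. replicate_mset (A y z) (f z)))" using M by simp
    also have "\<dots> = (\<Sum>k\<in>V. A y k * h (f k))" using assms by (simp add: summset_rep_sum)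
    also have "\<dots> = (\<Sum>k\<in>V. A y k * g k)" using hf by simp
    finally show "(\<Sum>k\<in>V. A x k * g k) = (\<Sum>k\<in>V. A y k * g k)" .
  qed
  have f: "X x = X y" if "?P x y" for x y
    using that wl_rel.simps(1)[of V A X x y] unfolding wl_stable_def by blast
  have r: "wl_stable V A X x x" for x unfolding wl_stable_def by (simp add: wl_refl)
  have s: "wl_stable V A X y x" if "wl_stable V A X x y" for x y
    using that unfolding wl_stable_def by (simp add: wl_sym)
  have t: "wl_stable V A X x z" if "wl_stable V A X x y" "wl_stable V A X y z" for x y z
    using that unfolding wl_stable_def by (meson wl_trans)
  show ?thesis unfolding good_def
    apply (intro conjI)
         apply simp
        apply (simp add: r)
       apply (simp add: s)
      apply (meson t)
     apply (simp add: f)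
    apply (rule eq)
    done
qed




fun pw :: "'v set \<Rightarrow> ('v \<Rightarrow> 'v \<Rightarrow> nat) \<Rightarrow> nat \<Rightarrow> 'v \<Rightarrow> 'v \<Rightarrow> nat" where
  "pw V A 0 x y = (if x = y then 1 else 0)"
| "pw V A (Suc l) x y = (\<Sum>k\<in>V. A x k * pw V A l k y)"

lemma sum_swap_aux:
  fixes a :: "'v \<Rightarrow> nat"
  shows "(\<Sum>k\<in>V. (\<Sum>m\<in>V. a m * b m k) * c k) = (\<Sum>m\<in>V. a m * (\<Sum>k\<in>V. b m k * c k))"
  by (simp add: sum_distrib_left sum_distrib_right mult.assoc) (rule sum.swap)

lemma pw_equit:
  assumes "finite V" "\<forall>x y. P x y \<longrightarrow> x \<in> V \<and> y \<in> V" "equit V A P"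
  shows "equit V (pw V A l) P"
proof (induction l)
  case 0
  show ?case unfolding equit_def
  proof (intro allI impI)
    fix x y and g :: "'a \<Rightarrow> nat"
    assume Pxy: "P x y" and ginv: "\<forall>k k'. P k k' \<longrightarrow> g k = g k'"
    have d: "(\<Sum>k\<in>V. pw V A 0 z k * g k) = g z" if "z \<in> V" for z
    proof -
      have "(\<Sum>k\<in>V. pw V A 0 z k * g k) = (\<Sum>k\<in>V. if z = k then g k else 0)"
        by (rule sum.cong) auto
      also have "\<dots> = g z" using assms(1) that by (simp add: sum.delta)
      finally show ?thesis .
    qed
    show "(\<Sum>k\<in>V. pw V A 0 x k * g k) = (\<Sum>k\<in>V. pw V A 0 y k * g k)"
      using d assms(2) Pxy ginv by metis
  qed
next
  case (Suc l)
  show ?case unfolding equit_def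
  proof (intro allI impI)
    fix x y and g :: "'a \<Rightarrow> nat"
    assume Pxy: "P x y" and ginv: "\<forall>k k'. P k k' \<longrightarrow> g k = g k'"
    define g' where "g' m = (\<Sum>k\<in>V. pw V A l m k * g k)" for m
    have g'inv: "\<forall>k k'. P k k' \<longrightarrow> g' k = g' k'"
      using Suc.IH ginv unfolding equit_def g'_def by blast
    have "(\<Sum>k\<in>V. pw V A (Suc l) x k * g k) = (\<Sum>m\<in>V. A x m * g' m)"
      unfolding g'_def by (simp add: sum_swap_aux)
    also have "\<dots> = (\<Sum>m\<in>V. A y m * g' m)"
      using assms(3) Pxy g'inv unfolding equit_def by blast
    also have "\<dots> = (\<Sum>k\<in>V. pw V A (Suc l) y k * g k)"
      unfolding g'_def by (simp add: sum_swap_aux)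
    finally show "(\<Sum>k\<in>V. pw V A (Suc l) x k * g k) = (\<Sum>k\<in>V. pw V A (Suc l) y k * g k)" .
  qed
qed

lemma finite_union_nodes: "finite (union_nodes G1 G2)"
  unfolding union_nodes_def by simp

lemma sum_union_nodes:
  "(\<Sum>k\<in>union_nodes G1 G2. f k) = (\<Sum>i<nv G1. f (Inl i)) + (\<Sum>j<nv G2. f (Inr j))"
  unfolding union_nodes_def
  by (subst sum.union_disjoint) (auto simp: sum.reindex)

lemma pw_cross:
  "pw (union_nodes G1 G2) (union_adj G1 G2) l (Inl i) (Inr j) = 0 \<and>
   pw (union_nodes G1 G2) (union_adj G1 G2) l (Inr j) (Inl i) = 0"
  by (induction l arbitrary: i j) (auto simp: sum_union_nodes)

lemma pw_Inl:
  "pw (union_nodes G1 G2) (union_adj G1 G2) l (Inl i) (Inl j) = mat_pow (nv G1) (adj G1) l i j"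
  by (induction l arbitrary: i) (auto simp: sum_union_nodes pw_cross)

lemma pw_Inr:
  "pw (union_nodes G1 G2) (union_adj G1 G2) l (Inr i) (Inr j) = mat_pow (nv G2) (adj G2) l i j"
  by (induction l arbitrary: i) (auto simp: sum_union_nodes pw_cross)

lemma card_nth:
  assumes "distinct xs"
  shows "card {a. a < length xs \<and> Q (xs ! a)} = card {i\<in>set xs. Q i}"
proof -
  have "{i\<in>set xs. Q i} = (!) xs ` {a. a < length xs \<and> Q (xs ! a)}"
    by (auto simp: in_set_conv_nth)
  moreover have "inj_on ((!) xs) {a. a < length xs \<and> Q (xs ! a)}"
    using assms by (intro inj_on_nth) auto
  ultimately show ?thesis by (simp add: card_image)
qed

definition Inv :: "graph \<Rightarrow> graph \<Rightarrow> bool" where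
  "Inv G1 G2 \<longleftrightarrow> (\<exists>P. good (union_nodes G1 G2) (union_adj G1 G2) (union_feat G1 G2) P \<and>
     (\<forall>x\<in>union_nodes G1 G2. card {i. i < nv G1 \<and> P (Inl i) x} = card {j. j < nv G2 \<and> P (Inr j) x}))"

lemma in_union_nodes[simp]:
  "Inl i \<in> union_nodes G1 G2 \<longleftrightarrow> i < nv G1" "Inr j \<in> union_nodes G1 G2 \<longleftrightarrow> j < nv G2"
  unfolding union_nodes_def by auto




lemma gnn_feat:
  assumes g: "good (union_nodes G1 G2) (union_adj G1 G2) (union_feat G1 G2) P"
    and c: "\<forall>x\<in>union_nodes G1 G2. card {i. i < nv G1 \<and> P (Inl i) x} = card {j. j < nv G2 \<and> P (Inr j) x}"
    and f: "wl_bounded f"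
    and Pxy: "P x y"
  shows "union_feat (apply_layer f G1) (apply_layer f G2) x = union_feat (apply_layer f G1) (apply_layer f G2) y"
proof -
  have cross: "f G1 i = f G2 j" if "P (Inl i) (Inr j)" for i j
  proof -
    have "i < nv G1" "j < nv G2" using good_dom[OF g that] by auto
    moreover have "union_stable G1 G2 (Inl i) (Inr j)"
      unfolding union_stable_def wl_stable_def
      using good_below_wl[OF finite_union_nodes g] that by blast
    ultimately show ?thesis using f unfolding wl_bounded_def by blast
  qed
  have exR: "\<exists>j. P (Inl i) (Inr j)" if "i < nv G1" for i
  proof -
    have "Inl i \<in> union_nodes G1 G2" using that by simp
    then have "P (Inl i) (Inl i)" using good_refl[OF g] by blast
    then have "i \<in> {i'. i' < nv G1 \<and> P (Inl i') (Inl i)}" using that by simp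
    moreover have "finite {i'. i' < nv G1 \<and> P (Inl i') (Inl i)}" by simp
    ultimately have "card {i'. i' < nv G1 \<and> P (Inl i') (Inl i)} \<noteq> 0" by (metis card_0_eq empty_iff)
    then have "card {j. j < nv G2 \<and> P (Inr j) (Inl i)} \<noteq> 0" using c[rule_format, OF \<open>Inl i \<in> union_nodes G1 G2\<close>] by metis
    then obtain j where "P (Inr j) (Inl i)" by (metis (no_types, lifting) card.empty empty_Collect_eq)
    then show ?thesis using good_sym[OF g] by blast
  qed
  have exL: "\<exists>i. P (Inl i) (Inr j)" if "j < nv G2" for j
  proof -
    have "Inr j \<in> union_nodes G1 G2" using that by simp
    then have "P (Inr j) (Inr j)" using good_refl[OF g] by blast
    then have "j \<in> {j'. j' < nv G2 \<and> P (Inr j') (Inr j)}" using that by simp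
    moreover have "finite {j'. j' < nv G2 \<and> P (Inr j') (Inr j)}" by simp
    ultimately have "card {j'. j' < nv G2 \<and> P (Inr j') (Inr j)} \<noteq> 0" by (metis card_0_eq empty_iff)
    then have "card {i. i < nv G1 \<and> P (Inl i) (Inr j)} \<noteq> 0" using c[rule_format, OF \<open>Inr j \<in> union_nodes G1 G2\<close>] by metis
    then obtain i where "P (Inl i) (Inr j)" by (metis (no_types, lifting) card.empty empty_Collect_eq)
    then show ?thesis by blast
  qed
  have dom: "x \<in> union_nodes G1 G2" "y \<in> union_nodes G1 G2" using good_dom[OF g Pxy] by auto
  show ?thesis
  proof (cases x)
    case xi: (Inl i)
    then have i: "i < nv G1" using dom by simp
    show ?thesis
    proof (cases y)
      case yi: (Inl i')
      obtain j where j: "P (Inl i) (Inr j)" using exR i by blast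
      have "P (Inl i') (Inl i)" using good_sym[OF g Pxy] xi yi by simp
      then have "P (Inl i') (Inr j)" using good_trans[OF g _ j] by blast
      then show ?thesis using xi yi cross j by (simp add: apply_layer_def)
    next
      case yj: (Inr j)
      then show ?thesis using xi cross Pxy by (simp add: apply_layer_def)
    qed
  next
    case xj: (Inr j)
    then have j: "j < nv G2" using dom by simp
    show ?thesis
    proof (cases y)
      case yi: (Inl i)
      then show ?thesis using xj cross good_sym[OF g Pxy] by (simp add: apply_layer_def)
    next
      case yj: (Inr j')
      obtain i where i: "P (Inl i) (Inr j)" using exL j by blast
      have "P (Inr j) (Inr j')" using Pxy xj yj by simp
      then have "P (Inl i) (Inr j')" using good_trans[OF g i] by blast
      then have "f G1 i = f G2 j'" by (rule cross)
      then show ?thesis using xj yj cross[OF i] by (simp add: apply_layer_def)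
    qed
  qed
qed

lemma gnn_step:
  assumes "Inv G1 G2" "wl_bounded f"
  shows "Inv (apply_layer f G1) (apply_layer f G2)"
proof -
  obtain P where g: "good (union_nodes G1 G2) (union_adj G1 G2) (union_feat G1 G2) P"
    and c: "\<forall>x\<in>union_nodes G1 G2. card {i. i < nv G1 \<and> P (Inl i) x} = card {j. j < nv G2 \<and> P (Inr j) x}"
    using assms(1) unfolding Inv_def by blast
  have N: "union_nodes (apply_layer f G1) (apply_layer f G2) = union_nodes G1 G2"
    by (simp add: union_nodes_def apply_layer_def)
  have A: "union_adj (apply_layer f G1) (apply_layer f G2) = union_adj G1 G2"
  proof (intro ext)
    fix x z show "union_adj (apply_layer f G1) (apply_layer f G2) x z = union_adj G1 G2 x z"
      by (cases x; cases z) (simp_all add: apply_layer_def)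
  qed
  have nv: "nv (apply_layer f G1) = nv G1" "nv (apply_layer f G2) = nv G2"
    by (simp_all add: apply_layer_def)
  have g': "good (union_nodes G1 G2) (union_adj G1 G2) (union_feat (apply_layer f G1) (apply_layer f G2)) P"
    unfolding good_def
    using good_dom[OF g] good_refl[OF g] good_sym[OF g] good_trans[OF g] good_equit[OF g]
      gnn_feat[OF g c assms(2)]
    by blast
  show ?thesis unfolding Inv_def N A nv using g' c by blast
qed




lemma goodI:
  assumes "\<And>x y. P x y \<Longrightarrow> x \<in> V \<and> y \<in> V" "\<And>x. x \<in> V \<Longrightarrow> P x x"
    "\<And>x y. P x y \<Longrightarrow> P y x" "\<And>x y z. P x y \<Longrightarrow> P y z \<Longrightarrow> P x z"
    "\<And>x y. P x y \<Longrightarrow> X x = X y" "equit V A P"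
  shows "good V A X P"
  using assms unfolding good_def by blast

lemma pool_step:
  assumes "Inv G1 G2"
  shows "Inv (pool p \<beta> l G1) (pool p \<beta> l G2)"
proof -
  obtain P where g: "good (union_nodes G1 G2) (union_adj G1 G2) (union_feat G1 G2) P"
    and c: "\<forall>x\<in>union_nodes G1 G2. card {i. i < nv G1 \<and> P (Inl i) x} = card {j. j < nv G2 \<and> P (Inr j) x}"
    using assms(1) unfolding Inv_def by blast
  define V where "V = union_nodes G1 G2"
  define UA where "UA = union_adj G1 G2"
  define UX where "UX = union_feat G1 G2"
  define K1 where "K1 = {i. i < nv G1 \<and> score p (feat G1 i) \<ge> \<beta>}"
  define K2 where "K2 = {i. i < nv G2 \<and> score p (feat G2 i) \<ge> \<beta>}"
  define s1 where "s1 = sorted_list_of_set K1"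
  define s2 where "s2 = sorted_list_of_set K2"
  define H1 where "H1 = pool p \<beta> l G1"
  define H2 where "H2 = pool p \<beta> l G2"
  have fK1: "finite K1" and fK2: "finite K2" unfolding K1_def K2_def by auto
  have d1: "distinct s1" and d2: "distinct s2" unfolding s1_def s2_def by auto
  have set1: "set s1 = K1" and set2: "set s2 = K2" unfolding s1_def s2_def using fK1 fK2 by auto
  have H1: "nv H1 = length s1" "\<And>a b. adj H1 a b = mat_pow (nv G1) (adj G1) l (s1 ! a) (s1 ! b)"
     "\<And>a. feat H1 a = feat G1 (s1 ! a)"
    unfolding H1_def pool_def Let_def s1_def K1_def by simp_all
  have H2: "nv H2 = length s2" "\<And>a b. adj H2 a b = mat_pow (nv G2) (adj G2) l (s2 ! a) (s2 ! b)"
     "\<And>a. feat H2 a = feat G2 (s2 ! a)"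
    unfolding H2_def pool_def Let_def s2_def K2_def by simp_all
  define emb where "emb x = (case x of Inl a \<Rightarrow> Inl (s1 ! a) | Inr b \<Rightarrow> Inr (s2 ! b))" for x
  define V' where "V' = union_nodes H1 H2"
  define K where "K = {w\<in>V. \<beta> \<le> score p (UX w)}"
  have fV: "finite V" unfolding V_def by (rule finite_union_nodes)
  have KV: "K \<subseteq> V" unfolding K_def by auto
  have Kchar: "Inl i \<in> K \<longleftrightarrow> i \<in> K1" "Inr j \<in> K \<longleftrightarrow> j \<in> K2" for i j
    unfolding K_def K1_def K2_def V_def UX_def by auto
  have emb_in: "emb x \<in> K" if "x \<in> V'" for x
  proof (cases x)
    case (Inl a)
    then have "a < length s1" using that H1 unfolding V'_def by simp
    then have "s1 ! a \<in> K1" using set1 nth_mem by blast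
    then show ?thesis using Inl Kchar unfolding emb_def by simp
  next
    case (Inr a)
    then have "a < length s2" using that H2 unfolding V'_def by simp
    then have "s2 ! a \<in> K2" using set2 nth_mem by blast
    then show ?thesis using Inr Kchar unfolding emb_def by simp
  qed
  have emb_inj: "inj_on emb V'"
  proof (rule inj_onI)
    fix x y assume xy: "x \<in> V'" "y \<in> V'" "emb x = emb y"
    show "x = y"
    proof (cases x; cases y)
      fix a b assume "x = Inl a" "y = Inl b"
      then show "x = y" using xy H1 d1 nth_eq_iff_index_eq unfolding V'_def emb_def by fastforce
    next
      fix a b assume "x = Inl a" "y = Inr b"
      then show "x = y" using xy unfolding emb_def by simp
    next
      fix a b assume "x = Inr a" "y = Inl b"
      then show "x = y" using xy unfolding emb_def by simp
    next
      fix a b assume "x = Inr a" "y = Inr b"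
      then show "x = y" using xy H2 d2 nth_eq_iff_index_eq unfolding V'_def emb_def by fastforce
    qed
  qed
  have emb_surj: "w \<in> emb ` V'" if "w \<in> K" for w
  proof (cases w)
    case (Inl i)
    then have "i \<in> set s1" using that Kchar set1 by simp
    then obtain a where "a < length s1" "s1 ! a = i" by (auto simp: in_set_conv_nth)
    then have "Inl a \<in> V'" "emb (Inl a) = w" using H1 Inl unfolding V'_def emb_def by simp_all
    then show ?thesis by (metis image_eqI)
  next
    case (Inr i)
    then have "i \<in> set s2" using that Kchar set2 by simp
    then obtain a where "a < length s2" "s2 ! a = i" by (auto simp: in_set_conv_nth)
    then have "Inr a \<in> V'" "emb (Inr a) = w" using H2 Inr unfolding V'_def emb_def by simp_all
    then show ?thesis by (metis image_eqI)
  qed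
  have embV: "emb ` V' = K" using emb_in emb_surj by blast
  have Ksat: "w \<in> K \<longleftrightarrow> w' \<in> K" if "P w w'" for w w'
    using good_dom[OF g that] good_feat[OF g that] unfolding K_def V_def UX_def by auto
  have adjH: "union_adj H1 H2 x z = pw V UA l (emb x) (emb z)" for x z
    unfolding V_def UA_def emb_def
    by (cases x; cases z) (simp_all add: H1 H2 pw_Inl pw_Inr pw_cross)
  have featH: "union_feat H1 H2 x = UX (emb x)" for x
    unfolding UX_def emb_def by (cases x) (simp_all add: H1 H2)
  define P' where "P' x y = (x \<in> V' \<and> y \<in> V' \<and> P (emb x) (emb y))" for x y
  have equit': "equit V' (union_adj H1 H2) P'"
    unfolding equit_def
  proof (intro allI impI)
    fix x y and g' :: "nat + nat \<Rightarrow> nat"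
    assume Pxy: "P' x y" and ginv: "\<forall>k k'. P' k k' \<longrightarrow> g' k = g' k'"
    define G where "G w = (if w \<in> K then g' (inv_into V' emb w) else 0)" for w
    have Ginv: "G w = G w'" if "P w w'" for w w'
    proof (cases "w \<in> K")
      case True
      then have w'K: "w' \<in> K" using Ksat that by blast
      have "w \<in> emb ` V'" "w' \<in> emb ` V'" using True w'K embV by auto
      then have "inv_into V' emb w \<in> V'" "inv_into V' emb w' \<in> V'"
        "emb (inv_into V' emb w) = w" "emb (inv_into V' emb w') = w'"
        by (auto intro: inv_into_into f_inv_into_f)
      then have "P' (inv_into V' emb w) (inv_into V' emb w')" using that unfolding P'_def by simp
      then show ?thesis using ginv True w'K unfolding G_def by simp
    next
      case False
      then have "w' \<notin> K" using Ksat that by blast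
      then show ?thesis using False unfolding G_def by simp
    qed
    have eqP: "equit V (pw V UA l) P"
      by (rule pw_equit[OF fV _ good_equit[OF g[folded V_def UA_def UX_def]]])
        (use good_dom[OF g] V_def in blast)
    have S: "(\<Sum>z\<in>V'. union_adj H1 H2 u z * g' z) = (\<Sum>w\<in>V. pw V UA l (emb u) w * G w)" for u
    proof -
      have "(\<Sum>z\<in>V'. union_adj H1 H2 u z * g' z) = (\<Sum>z\<in>V'. pw V UA l (emb u) (emb z) * G (emb z))"
      proof (rule sum.cong)
        fix z assume z: "z \<in> V'"
        have "G (emb z) = g' z" using emb_in[OF z] inv_into_f_f[OF emb_inj z] unfolding G_def by simp
        then show "union_adj H1 H2 u z * g' z = pw V UA l (emb u) (emb z) * G (emb z)"
          using adjH by simp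
      qed simp
      also have "\<dots> = (\<Sum>w\<in>emb ` V'. pw V UA l (emb u) w * G w)"
        using sum.reindex[OF emb_inj, of "\<lambda>w. pw V UA l (emb u) w * G w"] by (simp add: comp_def)
      also have "\<dots> = (\<Sum>w\<in>V. pw V UA l (emb u) w * G w)"
        unfolding embV
        by (rule sum.mono_neutral_left[OF fV KV]) (simp add: G_def)
      finally show ?thesis .
    qed
    have "P (emb x) (emb y)" using Pxy unfolding P'_def by simp
    then have "(\<Sum>w\<in>V. pw V UA l (emb x) w * G w) = (\<Sum>w\<in>V. pw V UA l (emb y) w * G w)"
      by (rule equitD[OF eqP]) (rule Ginv)
    then show "(\<Sum>z\<in>V'. union_adj H1 H2 x z * g' z) = (\<Sum>z\<in>V'. union_adj H1 H2 y z * g' z)"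
      using S by simp
  qed
  have embV': "emb x \<in> V" if "x \<in> V'" for x using emb_in[OF that] KV by blast
  have good': "good V' (union_adj H1 H2) (union_feat H1 H2) P'"
  proof (rule goodI)
    show "x \<in> V' \<and> y \<in> V'" if "P' x y" for x y using that unfolding P'_def by simp
    show "P' x x" if "x \<in> V'" for x
      using that embV' good_refl[OF g] unfolding P'_def V_def by blast
    show "P' y x" if "P' x y" for x y using that good_sym[OF g] unfolding P'_def by blast
    show "P' x z" if "P' x y" "P' y z" for x y z using that good_trans[OF g] unfolding P'_def by blast
    show "union_feat H1 H2 x = union_feat H1 H2 y" if "P' x y" for x y
      using that good_feat[OF g] featH unfolding P'_def UX_def by metis
    show "equit V' (union_adj H1 H2) P'" by (rule equit')
  qed
  have cnt: "card {a. a < nv H1 \<and> P' (Inl a) x} = card {a. a < nv H2 \<and> P' (Inr a) x}"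
    if x: "x \<in> V'" for x
  proof -
    have ex: "emb x \<in> K" using emb_in[OF x] .
    have "{a. a < nv H1 \<and> P' (Inl a) x} = {a. a < length s1 \<and> P (Inl (s1 ! a)) (emb x)}"
      using x H1 unfolding P'_def V'_def emb_def by auto
    then have "card {a. a < nv H1 \<and> P' (Inl a) x} = card {i\<in>set s1. P (Inl i) (emb x)}"
      using card_nth[OF d1] by simp
    also have "{i\<in>set s1. P (Inl i) (emb x)} = {i. i < nv G1 \<and> P (Inl i) (emb x)}"
    proof (intro Collect_cong iffI)
      fix i assume "i \<in> set s1 \<and> P (Inl i) (emb x)"
      then show "i < nv G1 \<and> P (Inl i) (emb x)" using set1 unfolding K1_def by auto
    next
      fix i assume i: "i < nv G1 \<and> P (Inl i) (emb x)"
      then have "Inl i \<in> K" using Ksat ex by blast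
      then show "i \<in> set s1 \<and> P (Inl i) (emb x)" using i Kchar set1 by simp
    qed
    also have "card \<dots> = card {j. j < nv G2 \<and> P (Inr j) (emb x)}"
      using c embV'[OF x] unfolding V_def by blast
    also have "{j. j < nv G2 \<and> P (Inr j) (emb x)} = {j\<in>set s2. P (Inr j) (emb x)}"
    proof (intro Collect_cong iffI)
      fix i assume "i \<in> set s2 \<and> P (Inr i) (emb x)"
      then show "i < nv G2 \<and> P (Inr i) (emb x)" using set2 unfolding K2_def by auto
    next
      fix i assume i: "i < nv G2 \<and> P (Inr i) (emb x)"
      then have "Inr i \<in> K" using Ksat ex by blast
      then show "i \<in> set s2 \<and> P (Inr i) (emb x)" using i Kchar set2 by simp
    qed
    also have "card \<dots> = card {a. a < length s2 \<and> P (Inr (s2 ! a)) (emb x)}"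
      using card_nth[OF d2, of "\<lambda>i. P (Inr i) (emb x)"] by simp
    also have "{a. a < length s2 \<and> P (Inr (s2 ! a)) (emb x)} = {a. a < nv H2 \<and> P' (Inr a) x}"
      using x H2 unfolding P'_def V'_def emb_def by auto
    finally show ?thesis .
  qed
  show ?thesis unfolding Inv_def H1_def[symmetric] H2_def[symmetric] V'_def[symmetric]
    using good' cnt by blast
qed




lemma count_map_upt: "count (mset (map f [0..<n])) v = card {i. i<n \<and> f i = v}"
proof (induction n)
  case 0 then show ?case by simp
next
  case (Suc n)
  have "{i. i<Suc n \<and> f i = v} = (if f n = v then insert n {i. i<n \<and> f i = v} else {i. i<n \<and> f i = v})"
    by (auto simp: less_Suc_eq)
  then show ?case using Suc by simp
qed

lemma run_inv:
  "\<forall>q\<in>set ops. valid_op q \<Longrightarrow> Inv G1 G2 \<Longrightarrow> Inv (run ops G1) (run ops G2)"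
proof (induction ops arbitrary: G1 G2)
  case Nil then show ?case by simp
next
  case (Cons q ops)
  show ?case
  proof (cases q)
    case (GNN f)
    then have "wl_bounded f" using Cons.prems by simp
    then have "Inv (apply_layer f G1) (apply_layer f G2)" using gnn_step Cons.prems by blast
    then show ?thesis using Cons GNN by simp
  next
    case (Pool p b l)
    have "Inv (pool p b l G1) (pool p b l G2)" using pool_step Cons.prems by blast
    then show ?thesis using Cons Pool by simp
  qed
qed

lemma inv_mset:
  assumes "Inv G1 G2"
  shows "mset (node_reps G1) = mset (node_reps G2)"
proof -
  obtain P where g: "good (union_nodes G1 G2) (union_adj G1 G2) (union_feat G1 G2) P"
    and c: "\<forall>x\<in>union_nodes G1 G2. card {i. i < nv G1 \<and> P (Inl i) x} = card {j. j < nv G2 \<and> P (Inr j) x}"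
    using assms(1) unfolding Inv_def by blast
  define V where "V = union_nodes G1 G2"
  define cl where "cl x = {w. P x w}" for x
  have clP: "cl u = cl w \<longleftrightarrow> P u w" if "w \<in> V" for u w
  proof
    assume "cl u = cl w"
    moreover have "w \<in> cl w" using good_refl[OF g] that unfolding cl_def V_def by simp
    ultimately show "P u w" unfolding cl_def by (metis mem_Collect_eq)
  next
    assume "P u w"
    then show "cl u = cl w" unfolding cl_def using good_sym[OF g] good_trans[OF g] by blast
  qed
  show ?thesis
  proof (rule multiset_eqI)
    fix v
    define T where "T = {x\<in>V. union_feat G1 G2 x = v}"
    have fT: "finite T" unfolding T_def V_def using finite_union_nodes by simp
    define S1 where "S1 = {i. i < nv G1 \<and> feat G1 i = v}"
    define S2 where "S2 = {i. i < nv G2 \<and> feat G2 i = v}"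
    have c1: "card S1 = (\<Sum>C\<in>cl ` T. card {i\<in>S1. cl (Inl i) = C})"
      unfolding card_eq_sum
      by (rule sum.group[symmetric]) (use fT in \<open>auto simp: S1_def T_def V_def\<close>)
    have c2: "card S2 = (\<Sum>C\<in>cl ` T. card {i\<in>S2. cl (Inr i) = C})"
      unfolding card_eq_sum
      by (rule sum.group[symmetric]) (use fT in \<open>auto simp: S2_def T_def V_def\<close>)
    have "(\<Sum>C\<in>cl ` T. card {i\<in>S1. cl (Inl i) = C}) = (\<Sum>C\<in>cl ` T. card {i\<in>S2. cl (Inr i) = C})"
    proof (rule sum.cong[OF refl])
      fix C assume "C \<in> cl ` T"
      then obtain w where w: "w \<in> T" "C = cl w" by blast
      have wV: "w \<in> V" using w unfolding T_def by simp
      have e1: "{i\<in>S1. cl (Inl i) = C} = {i. i < nv G1 \<and> P (Inl i) w}"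
        using w wV clP good_feat[OF g] unfolding S1_def T_def by force
      have e2: "{i\<in>S2. cl (Inr i) = C} = {i. i < nv G2 \<and> P (Inr i) w}"
        using w wV clP good_feat[OF g] unfolding S2_def T_def by force
      show "card {i\<in>S1. cl (Inl i) = C} = card {i\<in>S2. cl (Inr i) = C}"
        unfolding e1 e2 using c wV unfolding V_def by blast
    qed
    then have "card S1 = card S2" using c1 c2 by simp
    then show "count (mset (node_reps G1)) v = count (mset (node_reps G2)) v"
      unfolding node_reps_def count_map_upt S1_def S2_def .
  qed
qed

theorem theorem2:
  fixes G1 G2 :: graph and ops :: "op list" and R :: "real list list \<Rightarrow> 'r"
  assumes "symmetric_graph G1" and "symmetric_graph G2"
    and "wl_indistinguishable G1 G2"
    and "\<forall>q\<in>set ops. valid_op q"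
    and "perm_invariant R"
  shows "network_output ops R G1 = network_output ops R G2"
proof -
  define V where "V = union_nodes G1 G2"
  define P where "P x y = (x \<in> V \<and> y \<in> V \<and> union_stable G1 G2 x y)" for x y
  have g: "good V (union_adj G1 G2) (union_feat G1 G2) P"
    unfolding P_def union_stable_def V_def by (rule stable_good[OF finite_union_nodes])
  have c: "\<forall>x\<in>V. card {i. i < nv G1 \<and> P (Inl i) x} = card {j. j < nv G2 \<and> P (Inr j) x}"
  proof
    fix x assume x: "x \<in> V"
    have "{i. i < nv G1 \<and> P (Inl i) x} = {i. i < nv G1 \<and> union_stable G1 G2 (Inl i) x}"
      using x unfolding P_def V_def by auto
    moreover have "{j. j < nv G2 \<and> P (Inr j) x} = {j. j < nv G2 \<and> union_stable G1 G2 (Inr j) x}"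
      using x unfolding P_def V_def by auto
    ultimately show "card {i. i < nv G1 \<and> P (Inl i) x} = card {j. j < nv G2 \<and> P (Inr j) x}"
      using assms(3) x unfolding wl_indistinguishable_def V_def by simp
  qed
  have "Inv G1 G2" unfolding Inv_def using g c unfolding V_def by blast
  then have "Inv (run ops G1) (run ops G2)" using run_inv assms(4) by blast
  then have "mset (node_reps (run ops G1)) = mset (node_reps (run ops G2))" by (rule inv_mset)
  then show ?thesis using assms(5) unfolding network_output_def perm_invariant_def by blast
qed


end
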